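(* Every constantizable complete theory is strongly minimal.
   Context: A $T$-formula $\varphi(\overline{x})$ is constantizable if $T$ has an expansion $T'$ (a complete theory $T'\supseteq T$ in a larger language) such that $\varphi(\overline{x})$ is $T'$-equivalent to a Boolean combination of formulas of the forms $x\approx y$ and $x\approx c$, with variables $x,y$ and constant symbols $c$. A theory $T$ is constantizable if every $T$-formula is constantizable. $T$ is strongly minimal if for every formula $\varphi(x,\bar a)$ with parameters $\bar a$ from a model of $T$, either $\varphi(x,\bar a)$ or $\neg\varphi(x,\bar a)$ has finitely many solutions. *)

theory Defs
  imports Main
begin

datatype 'f trm = Var nat | Fn 'f "'f trm list"

datatype ('f, 'r) fm =
    FF
  | Eq "'f trm" "'f trm"
  | Rl 'r "'f trm list"
  | Neg "('f, 'r) fm"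
  | Conj "('f, 'r) fm" "('f, 'r) fm"
  | Ex nat "('f, 'r) fm"

text \<open>A language: partial arity maps for function symbols and relation symbols.
  A symbol belongs to the language iff its arity is defined.
  Constant symbols are function symbols of arity 0.\<close>
type_synonym ('f, 'r) lang = "('f \<rightharpoonup> nat) \<times> ('r \<rightharpoonup> nat)"

definition sublang :: "('f, 'r) lang \<Rightarrow> ('f, 'r) lang \<Rightarrow> bool" where
  "sublang L L' \<longleftrightarrow> fst L \<subseteq>\<^sub>m fst L' \<and> snd L \<subseteq>\<^sub>m snd L'"

fun wf_trm :: "('f, 'r) lang \<Rightarrow> 'f trm \<Rightarrow> bool" where
  "wf_trm L (Var x) = True"
| "wf_trm L (Fn f ts) = (fst L f = Some (length ts) \<and> (\<forall>t\<in>set ts. wf_trm L t))"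

fun wf_fm :: "('f, 'r) lang \<Rightarrow> ('f, 'r) fm \<Rightarrow> bool" where
  "wf_fm L FF = True"
| "wf_fm L (Eq s t) = (wf_trm L s \<and> wf_trm L t)"
| "wf_fm L (Rl r ts) = (snd L r = Some (length ts) \<and> (\<forall>t\<in>set ts. wf_trm L t))"
| "wf_fm L (Neg p) = wf_fm L p"
| "wf_fm L (Conj p q) = (wf_fm L p \<and> wf_fm L q)"
| "wf_fm L (Ex x p) = wf_fm L p"

fun fv_trm :: "'f trm \<Rightarrow> nat set" where
  "fv_trm (Var x) = {x}"
| "fv_trm (Fn f ts) = (\<Union>t\<in>set ts. fv_trm t)"

fun fv :: "('f, 'r) fm \<Rightarrow> nat set" where
  "fv FF = {}"
| "fv (Eq s t) = fv_trm s \<union> fv_trm t"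
| "fv (Rl r ts) = (\<Union>t\<in>set ts. fv_trm t)"
| "fv (Neg p) = fv p"
| "fv (Conj p q) = fv p \<union> fv q"
| "fv (Ex x p) = fv p - {x}"

definition sentence :: "('f, 'r) lang \<Rightarrow> ('f, 'r) fm \<Rightarrow> bool" where
  "sentence L p \<longleftrightarrow> wf_fm L p \<and> fv p = {}"

record ('f, 'r, 'u) struc =
  dom :: "'u set"
  fn  :: "'f \<Rightarrow> 'u list \<Rightarrow> 'u"
  rl  :: "'r \<Rightarrow> 'u list \<Rightarrow> bool"

definition is_struc :: "('f, 'r) lang \<Rightarrow> ('f, 'r, 'u) struc \<Rightarrow> bool" where
  "is_struc L M \<longleftrightarrow> dom M \<noteq> {} \<and>
     (\<forall>f n xs. fst L f = Some n \<longrightarrow> length xs = n \<longrightarrow> set xs \<subseteq> dom M \<longrightarrow> fn M f xs \<in> dom M)"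

fun eval :: "('f, 'r, 'u) struc \<Rightarrow> (nat \<Rightarrow> 'u) \<Rightarrow> 'f trm \<Rightarrow> 'u" where
  "eval M e (Var x) = e x"
| "eval M e (Fn f ts) = fn M f (map (eval M e) ts)"

fun sat :: "('f, 'r, 'u) struc \<Rightarrow> (nat \<Rightarrow> 'u) \<Rightarrow> ('f, 'r) fm \<Rightarrow> bool" where
  "sat M e FF = False"
| "sat M e (Eq s t) = (eval M e s = eval M e t)"
| "sat M e (Rl r ts) = rl M r (map (eval M e) ts)"
| "sat M e (Neg p) = (\<not> sat M e p)"
| "sat M e (Conj p q) = (sat M e p \<and> sat M e q)"
| "sat M e (Ex x p) = (\<exists>a\<in>dom M. sat M (e(x := a)) p)"

definition holds :: "('f, 'r, 'u) struc \<Rightarrow> ('f, 'r) fm \<Rightarrow> bool" where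
  "holds M p \<longleftrightarrow> (\<forall>e. range e \<subseteq> dom M \<longrightarrow> sat M e p)"

definition Th :: "('f, 'r) lang \<Rightarrow> ('f, 'r, 'u) struc \<Rightarrow> ('f, 'r) fm set" where
  "Th L M = {p. sentence L p \<and> holds M p}"

definition is_model :: "('f, 'r) lang \<Rightarrow> ('f, 'r) fm set \<Rightarrow> ('f, 'r, 'u) struc \<Rightarrow> bool" where
  "is_model L T M \<longleftrightarrow> is_struc L M \<and> (\<forall>p\<in>T. holds M p)"

text \<open>A complete L-theory: the theory of some L-structure (with universe in type 'u).\<close>
definition complete_theory :: "'u itself \<Rightarrow> ('f, 'r) lang \<Rightarrow> ('f, 'r) fm set \<Rightarrow> bool" where
  "complete_theory U L T \<longleftrightarrow> (\<exists>M :: ('f, 'r, 'u) struc. is_struc L M \<and> T = Th L M)"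

inductive_set boolcomb :: "('f, 'r) lang \<Rightarrow> ('f, 'r) fm set" for L where
  eq_var: "Eq (Var x) (Var y) \<in> boolcomb L"
| eq_const: "fst L c = Some 0 \<Longrightarrow> Eq (Var x) (Fn c []) \<in> boolcomb L"
| bot: "FF \<in> boolcomb L"
| neg: "p \<in> boolcomb L \<Longrightarrow> Neg p \<in> boolcomb L"
| conj: "p \<in> boolcomb L \<Longrightarrow> q \<in> boolcomb L \<Longrightarrow> Conj p q \<in> boolcomb L"

definition equiv_in :: "'u itself \<Rightarrow> ('f, 'r) lang \<Rightarrow> ('f, 'r) fm set \<Rightarrow> ('f, 'r) fm \<Rightarrow> ('f, 'r) fm \<Rightarrow> bool" where
  "equiv_in U L T p q \<longleftrightarrow>
     (\<forall>M :: ('f, 'r, 'u) struc. is_model L T M \<longrightarrow>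
        (\<forall>e. range e \<subseteq> dom M \<longrightarrow> (sat M e p \<longleftrightarrow> sat M e q)))"

definition constantizable_fm ::
  "'u itself \<Rightarrow> ('f, 'r) lang \<Rightarrow> ('f, 'r) fm set \<Rightarrow> ('f, 'r) fm \<Rightarrow> bool" where
  "constantizable_fm U L T p \<longleftrightarrow>
     (\<exists>L' T'. sublang L L' \<and> complete_theory U L' T' \<and> T \<subseteq> T' \<and>
        (\<exists>q \<in> boolcomb L'. equiv_in U L' T' p q))"

definition constantizable :: "'u itself \<Rightarrow> ('f, 'r) lang \<Rightarrow> ('f, 'r) fm set \<Rightarrow> bool" where
  "constantizable U L T \<longleftrightarrow> (\<forall>p. wf_fm L p \<longrightarrow> constantizable_fm U L T p)"

text \<open>Strong minimality: in every model of T (universe in type 'v), every formula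
  phi(x, a) with parameters a (given by the assignment e) defines a finite or cofinite set.\<close>
definition strongly_minimal :: "'v itself \<Rightarrow> ('f, 'r) lang \<Rightarrow> ('f, 'r) fm set \<Rightarrow> bool" where
  "strongly_minimal V L T \<longleftrightarrow>
     (\<forall>N :: ('f, 'r, 'v) struc. is_model L T N \<longrightarrow>
        (\<forall>p x e. wf_fm L p \<longrightarrow> range e \<subseteq> dom N \<longrightarrow>
           finite {a \<in> dom N. sat N (e(x := a)) p} \<or>
           finite {a \<in> dom N. \<not> sat N (e(x := a)) p}))"

end

theory Submission
  imports Defs
begin

definition disj :: "('f, 'r) fm \<Rightarrow> ('f, 'r) fm \<Rightarrow> ('f, 'r) fm" where
  "disj p q = Neg (Conj (Neg p) (Neg q))"

fun bigor :: "('f, 'r) fm list \<Rightarrow> ('f, 'r) fm" where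
  "bigor [] = FF"
| "bigor (p # ps) = disj p (bigor ps)"

definition AM :: "nat \<Rightarrow> nat list \<Rightarrow> ('f, 'r) fm \<Rightarrow> ('f, 'r) fm" where
  "AM x zs p = foldr Ex zs (Neg (Ex x (Conj p (Neg (bigor (map (\<lambda>z. Eq (Var x) (Var z)) zs))))))"

lemma eval_cong: "(\<forall>v\<in>fv_trm t. e v = e' v) \<Longrightarrow> eval N e t = eval N e' t"
  by (induction t) (auto cong: map_cong)

lemma sat_cong: "(\<forall>v\<in>fv p. e v = e' v) \<Longrightarrow> sat N e p = sat N e' p"
proof (induction p arbitrary: e e')
  case (Eq s t) then show ?case using eval_cong[of s e e' N] eval_cong[of t e e' N] by auto
next
  case (Rl r ts)
  have "\<And>t. t \<in> set ts \<Longrightarrow> eval N e t = eval N e' t"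
  proof -
    fix t assume t: "t \<in> set ts"
    then have "\<forall>v\<in>fv_trm t. e v = e' v" using Rl.prems by auto
    then show "eval N e t = eval N e' t" by (rule eval_cong)
  qed
  then have "map (eval N e) ts = map (eval N e') ts" by simp
  then show ?case by (simp only: sat.simps)
next
  case (Ex x p)
  have "\<And>a. sat N (e(x:=a)) p = sat N (e'(x:=a)) p"
    using Ex.prems by (intro Ex.IH) auto
  then show ?case by simp
next
  case (Neg p)
  have "sat N e p = sat N e' p" using Neg.prems by (intro Neg.IH) auto
  then show ?case by simp
next
  case (Conj p q)
  have "sat N e p = sat N e' p" using Conj.prems by (intro Conj.IH(1)) auto
  moreover have "sat N e q = sat N e' q" using Conj.prems by (intro Conj.IH(2)) auto
  ultimately show ?case by simp
qed simp

lemma sat_exs: "sat N e (foldr Ex zs \<psi>) \<longleftrightarrow>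
  (\<exists>e'. (\<forall>v. v \<notin> set zs \<longrightarrow> e' v = e v) \<and> (\<forall>v\<in>set zs. e' v \<in> dom N) \<and> sat N e' \<psi>)"
proof (induction zs arbitrary: e)
  case Nil
  show ?case
  proof
    assume "sat N e (foldr Ex [] \<psi>)" then show "\<exists>e'. (\<forall>v. v \<notin> set [] \<longrightarrow> e' v = e v) \<and> (\<forall>v\<in>set []. e' v \<in> dom N) \<and> sat N e' \<psi>" by auto
  next
    assume "\<exists>e'. (\<forall>v. v \<notin> set [] \<longrightarrow> e' v = e v) \<and> (\<forall>v\<in>set []. e' v \<in> dom N) \<and> sat N e' \<psi>"
    then obtain e' where "\<forall>v. e' v = e v" "sat N e' \<psi>" by auto
    then have "e' = e" by (simp add: ext)
    then show "sat N e (foldr Ex [] \<psi>)" using \<open>sat N e' \<psi>\<close> by simp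
  qed
next
  case (Cons z zs)
  show ?case
  proof
    assume "sat N e (foldr Ex (z # zs) \<psi>)"
    then obtain a where a: "a \<in> dom N" "sat N (e(z:=a)) (foldr Ex zs \<psi>)" by auto
    then obtain e' where e': "\<forall>v. v \<notin> set zs \<longrightarrow> e' v = (e(z:=a)) v" "\<forall>v\<in>set zs. e' v \<in> dom N" "sat N e' \<psi>"
      using iffD1[OF Cons.IH[of "e(z:=a)"] a(2)] by blast
    have "\<forall>v\<in>set (z#zs). e' v \<in> dom N" using e' a by (cases "z \<in> set zs") auto
    moreover have "\<forall>v. v \<notin> set (z#zs) \<longrightarrow> e' v = e v" using e' by auto
    ultimately show "\<exists>e'. (\<forall>v. v \<notin> set (z#zs) \<longrightarrow> e' v = e v) \<and> (\<forall>v\<in>set (z#zs). e' v \<in> dom N) \<and> sat N e' \<psi>"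
      using e' by blast
  next
    assume "\<exists>e'. (\<forall>v. v \<notin> set (z#zs) \<longrightarrow> e' v = e v) \<and> (\<forall>v\<in>set (z#zs). e' v \<in> dom N) \<and> sat N e' \<psi>"
    then obtain e' where e': "\<forall>v. v \<notin> set (z#zs) \<longrightarrow> e' v = e v" "\<forall>v\<in>set (z#zs). e' v \<in> dom N" "sat N e' \<psi>"
      by blast
    have h1: "\<forall>v. v \<notin> set zs \<longrightarrow> e' v = (e(z:=e' z)) v" using e' by auto
    have ex: "\<exists>e''. (\<forall>v. v \<notin> set zs \<longrightarrow> e'' v = (e(z:=e' z)) v) \<and> (\<forall>v\<in>set zs. e'' v \<in> dom N) \<and> sat N e'' \<psi>"
      using h1 e'(2,3) by (intro exI[of _ e'] conjI) auto
    have "sat N (e(z:=e' z)) (foldr Ex zs \<psi>)" by (rule iffD2[OF Cons.IH ex])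
    moreover have "e' z \<in> dom N" using e' by auto
    ultimately show "sat N e (foldr Ex (z # zs) \<psi>)" by auto
  qed
qed

lemma fv_exs: "fv (foldr Ex zs \<psi>) = fv \<psi> - set zs"
  by (induction zs) auto

lemma wf_exs: "wf_fm L (foldr Ex zs \<psi>) = wf_fm L \<psi>"
  by (induction zs) auto

lemma sat_bigor: "sat N e (bigor ps) \<longleftrightarrow> (\<exists>p\<in>set ps. sat N e p)"
  by (induction ps) (auto simp: disj_def)

lemma fv_bigor: "fv (bigor ps) = (\<Union>p\<in>set ps. fv p)"
  by (induction ps) (auto simp: disj_def)

lemma wf_bigor: "(\<forall>p\<in>set ps. wf_fm L p) \<Longrightarrow> wf_fm L (bigor ps)"
  by (induction ps) (auto simp: disj_def)

lemma finite_fv_trm: "finite (fv_trm t)"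
  by (induction t) auto

lemma finite_fv: "finite (fv p)"
  by (induction p) (auto simp: finite_fv_trm)

lemma wf_AM: "wf_fm L p \<Longrightarrow> wf_fm L (AM x zs p)"
  unfolding AM_def by (auto simp: wf_exs intro!: wf_bigor)

lemma fv_AM: "fv (AM x zs p) \<subseteq> fv p"
  unfolding AM_def by (auto simp: fv_exs fv_bigor)

lemma AM_sem:
  "sat N e (AM x zs p) \<longleftrightarrow> (\<exists>e'. (\<forall>v. v \<notin> set zs \<longrightarrow> e' v = e v) \<and> (\<forall>v\<in>set zs. e' v \<in> dom N) \<and>
     (\<forall>a\<in>dom N. sat N (e'(x:=a)) p \<longrightarrow> (\<exists>z\<in>set zs. a = (e'(x:=a)) z)))"
proof -
  have "\<And>e'. sat N e' (Neg (Ex x (Conj p (Neg (bigor (map (\<lambda>z. Eq (Var x) (Var z)) zs)))))) \<longleftrightarrow>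
     (\<forall>a\<in>dom N. sat N (e'(x:=a)) p \<longrightarrow> (\<exists>z\<in>set zs. a = (e'(x:=a)) z))"
    by (simp add: sat_bigor)
  then show ?thesis unfolding AM_def sat_exs by simp
qed

lemma AM_sound:
  assumes "sat N e (AM x zs p)" "set zs \<inter> insert x (fv p) = {}"
  shows "finite {a \<in> dom N. sat N (e(x:=a)) p}"
proof -
  obtain e' where e': "\<forall>v. v \<notin> set zs \<longrightarrow> e' v = e v"
    "\<forall>a\<in>dom N. sat N (e'(x:=a)) p \<longrightarrow> (\<exists>z\<in>set zs. a = (e'(x:=a)) z)"
    using assms(1) unfolding AM_sem by blast
  have "{a \<in> dom N. sat N (e(x:=a)) p} \<subseteq> e' ` set zs"
  proof
    fix a assume a: "a \<in> {a \<in> dom N. sat N (e(x:=a)) p}"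
    have "sat N (e'(x:=a)) p = sat N (e(x:=a)) p"
      using assms(2) e'(1) by (intro sat_cong) auto
    then have "sat N (e'(x:=a)) p" using a by simp
    then obtain z where z: "z \<in> set zs" "a = (e'(x:=a)) z" using a e'(2) by blast
    moreover have "z \<noteq> x" using assms(2) z(1) by auto
    ultimately show "a \<in> e' ` set zs" by simp
  qed
  then show ?thesis using finite_subset by blast
qed

lemma cover:
  assumes "distinct zs" "finite S" "card S \<le> length zs" "S \<subseteq> dom N" "d \<in> dom N"
  shows "\<exists>e'. (\<forall>v. v \<notin> set zs \<longrightarrow> e' v = e v) \<and> (\<forall>v\<in>set zs. e' v \<in> dom N) \<and> S \<subseteq> e' ` set zs"
  using assms
proof (induction zs arbitrary: S)
  case Nil
  then show ?case by (auto intro!: exI[of _ e])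
next
  case (Cons z zs)
  show ?case
  proof (cases "S = {}")
    case True
    then obtain e' where e': "\<forall>v. v \<notin> set zs \<longrightarrow> e' v = e v" "\<forall>v\<in>set zs. e' v \<in> dom N"
      using Cons.IH[of "{}"] Cons.prems by auto
    show ?thesis using True e' Cons.prems by (intro exI[of _ "e'(z:=d)"]) auto
  next
    case False
    then obtain s where s: "s \<in> S" by auto
    have "card (S - {s}) \<le> length zs" using Cons.prems s by auto
    then obtain e' where e': "\<forall>v. v \<notin> set zs \<longrightarrow> e' v = e v" "\<forall>v\<in>set zs. e' v \<in> dom N"
      "S - {s} \<subseteq> e' ` set zs"
      using Cons.IH[of "S - {s}"] Cons.prems by auto
    have "z \<notin> set zs" using Cons.prems by auto
    then have "e'(z:=s) ` set zs = e' ` set zs" by auto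
    then show ?thesis using e' s Cons.prems \<open>z \<notin> set zs\<close>
      by (intro exI[of _ "e'(z:=s)"]) auto
  qed
qed

lemma AM_complete:
  assumes "distinct zs" "set zs \<inter> insert x (fv p) = {}"
    "finite {a \<in> dom N. sat N (e(x:=a)) p}" "card {a \<in> dom N. sat N (e(x:=a)) p} \<le> length zs"
    "d \<in> dom N"
  shows "sat N e (AM x zs p)"
proof -
  let ?S = "{a \<in> dom N. sat N (e(x:=a)) p}"
  obtain e' where e': "\<forall>v. v \<notin> set zs \<longrightarrow> e' v = e v" "\<forall>v\<in>set zs. e' v \<in> dom N" "?S \<subseteq> e' ` set zs"
    using cover[OF assms(1,3,4) _ assms(5), of e] by blast
  have "\<forall>a\<in>dom N. sat N (e'(x:=a)) p \<longrightarrow> (\<exists>z\<in>set zs. a = (e'(x:=a)) z)"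
  proof (intro ballI impI)
    fix a assume a: "a \<in> dom N" "sat N (e'(x:=a)) p"
    have "sat N (e'(x:=a)) p = sat N (e(x:=a)) p"
      using assms(2) e'(1) by (intro sat_cong) auto
    then have "a \<in> ?S" using a by auto
    then obtain z where "z \<in> set zs" "a = e' z" using e'(3) by auto
    moreover have "z \<noteq> x" using assms(2) \<open>z \<in> set zs\<close> by auto
    ultimately show "\<exists>z\<in>set zs. a = (e'(x:=a)) z" by auto
  qed
  then show ?thesis unfolding AM_sem using e' by blast
qed

lemma boolcomb_fin:
  assumes "q \<in> boolcomb L"
  shows "\<exists>K. \<forall>e. \<exists>F. finite F \<and> card F \<le> K \<and>
     ((\<forall>a. sat M (e(x:=a)) q \<longleftrightarrow> a \<in> F) \<or> (\<forall>a. sat M (e(x:=a)) q \<longleftrightarrow> a \<notin> F))"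
  using assms
proof (induction q rule: boolcomb.induct)
  case (eq_var u v)
  show ?case
  proof (intro exI[of _ 1] allI)
    fix e
    show "\<exists>F. finite F \<and> card F \<le> 1 \<and>
     ((\<forall>a. sat M (e(x:=a)) (Eq (Var u) (Var v)) \<longleftrightarrow> a \<in> F) \<or> (\<forall>a. sat M (e(x:=a)) (Eq (Var u) (Var v)) \<longleftrightarrow> a \<notin> F))"
    proof (cases "u = x"; cases "v = x")
      assume "u = x" "v \<noteq> x" then show ?thesis by (intro exI[of _ "{e v}"]) auto
    next
      assume "u \<noteq> x" "v = x" then show ?thesis by (intro exI[of _ "{e u}"]) auto
    next
      assume "u = x" "v = x" then show ?thesis by (intro exI[of _ "{}"]) auto
    next
      assume "u \<noteq> x" "v \<noteq> x" then show ?thesis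
        by (cases "e u = e v") (rule exI[of _ "{}"]; simp)+
    qed
  qed
next
  case (eq_const c u)
  show ?case
  proof (intro exI[of _ 1] allI)
    fix e
    show "\<exists>F. finite F \<and> card F \<le> 1 \<and>
     ((\<forall>a. sat M (e(x:=a)) (Eq (Var u) (Fn c [])) \<longleftrightarrow> a \<in> F) \<or> (\<forall>a. sat M (e(x:=a)) (Eq (Var u) (Fn c [])) \<longleftrightarrow> a \<notin> F))"
    proof (cases "u = x")
      assume "u = x" then show ?thesis by (intro exI[of _ "{fn M c []}"]) auto
    next
      assume "u \<noteq> x" then show ?thesis
        by (cases "e u = fn M c []") (rule exI[of _ "{}"]; simp)+
    qed
  qed
next
  case bot
  then show ?case by (intro exI[of _ 0] allI exI[of _ "{}"]) auto
next
  case (neg p)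
  then obtain K where K: "\<forall>e. \<exists>F. finite F \<and> card F \<le> K \<and>
     ((\<forall>a. sat M (e(x:=a)) p \<longleftrightarrow> a \<in> F) \<or> (\<forall>a. sat M (e(x:=a)) p \<longleftrightarrow> a \<notin> F))" by blast
  show ?case
  proof (intro exI[of _ K] allI)
    fix e
    obtain F where "finite F \<and> card F \<le> K \<and>
     ((\<forall>a. sat M (e(x:=a)) p \<longleftrightarrow> a \<in> F) \<or> (\<forall>a. sat M (e(x:=a)) p \<longleftrightarrow> a \<notin> F))" using K by blast
    then show "\<exists>F. finite F \<and> card F \<le> K \<and>
     ((\<forall>a. sat M (e(x:=a)) (Neg p) \<longleftrightarrow> a \<in> F) \<or> (\<forall>a. sat M (e(x:=a)) (Neg p) \<longleftrightarrow> a \<notin> F))"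
      by (intro exI[of _ F]) auto
  qed
next
  case (conj p q)
  then obtain K1 K2 where K1: "\<forall>e. \<exists>F. finite F \<and> card F \<le> K1 \<and>
     ((\<forall>a. sat M (e(x:=a)) p \<longleftrightarrow> a \<in> F) \<or> (\<forall>a. sat M (e(x:=a)) p \<longleftrightarrow> a \<notin> F))"
    and K2: "\<forall>e. \<exists>F. finite F \<and> card F \<le> K2 \<and>
     ((\<forall>a. sat M (e(x:=a)) q \<longleftrightarrow> a \<in> F) \<or> (\<forall>a. sat M (e(x:=a)) q \<longleftrightarrow> a \<notin> F))" by blast
  show ?case
  proof (intro exI[of _ "K1 + K2"] allI)
    fix e
    obtain F1 where F1: "finite F1" "card F1 \<le> K1"
     "(\<forall>a. sat M (e(x:=a)) p \<longleftrightarrow> a \<in> F1) \<or> (\<forall>a. sat M (e(x:=a)) p \<longleftrightarrow> a \<notin> F1)" using K1 by blast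
    obtain F2 where F2: "finite F2" "card F2 \<le> K2"
     "(\<forall>a. sat M (e(x:=a)) q \<longleftrightarrow> a \<in> F2) \<or> (\<forall>a. sat M (e(x:=a)) q \<longleftrightarrow> a \<notin> F2)" using K2 by blast
    have c1: "card (F1 \<inter> F2) \<le> K1 + K2" using F1 F2 card_mono[of F1 "F1 \<inter> F2"] by auto
    have c2: "card (F1 - F2) \<le> K1 + K2" using F1 F2 card_mono[of F1 "F1 - F2"] by auto
    have c3: "card (F2 - F1) \<le> K1 + K2" using F1 F2 card_mono[of F2 "F2 - F1"] by auto
    have c4: "card (F1 \<union> F2) \<le> K1 + K2" using F1 F2 card_Un_le[of F1 F2] by auto
    show "\<exists>F. finite F \<and> card F \<le> K1 + K2 \<and>
     ((\<forall>a. sat M (e(x:=a)) (Conj p q) \<longleftrightarrow> a \<in> F) \<or> (\<forall>a. sat M (e(x:=a)) (Conj p q) \<longleftrightarrow> a \<notin> F))"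
      using F1(3) F2(3)
    proof (elim disjE)
      assume "\<forall>a. sat M (e(x:=a)) p \<longleftrightarrow> a \<in> F1" "\<forall>a. sat M (e(x:=a)) q \<longleftrightarrow> a \<in> F2"
      then show ?thesis using c1 F1 by (intro exI[of _ "F1 \<inter> F2"]) auto
    next
      assume "\<forall>a. sat M (e(x:=a)) p \<longleftrightarrow> a \<in> F1" "\<forall>a. sat M (e(x:=a)) q \<longleftrightarrow> a \<notin> F2"
      then show ?thesis using c2 F1 by (intro exI[of _ "F1 - F2"]) auto
    next
      assume "\<forall>a. sat M (e(x:=a)) p \<longleftrightarrow> a \<notin> F1" "\<forall>a. sat M (e(x:=a)) q \<longleftrightarrow> a \<in> F2"
      then show ?thesis using c3 F2 by (intro exI[of _ "F2 - F1"]) auto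
    next
      assume "\<forall>a. sat M (e(x:=a)) p \<longleftrightarrow> a \<notin> F1" "\<forall>a. sat M (e(x:=a)) q \<longleftrightarrow> a \<notin> F2"
      then show ?thesis using c4 F1 F2 by (intro exI[of _ "F1 \<union> F2"]) auto
    qed
  qed
qed

lemma holds_closure:
  fixes N :: "('f, 'r, 'u) struc" and \<chi> :: "('f, 'r) fm"
  assumes "set vs = fv \<chi>"
  shows "holds N (Neg (foldr Ex vs (Neg \<chi>))) \<longleftrightarrow> (\<forall>e :: nat \<Rightarrow> 'u. range e \<subseteq> dom N \<longrightarrow> sat N e \<chi>)"
proof
  assume h: "holds N (Neg (foldr Ex vs (Neg \<chi>)))"
  show "\<forall>e :: nat \<Rightarrow> 'u. range e \<subseteq> dom N \<longrightarrow> sat N e \<chi>"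
  proof (intro allI impI)
    fix e :: "nat \<Rightarrow> 'u" assume "range e \<subseteq> dom N"
    then have "sat N e (Neg (foldr Ex vs (Neg \<chi>)))" using h unfolding holds_def by blast
    then show "sat N e \<chi>" unfolding sat.simps sat_exs using \<open>range e \<subseteq> dom N\<close> by auto
  qed
next
  assume h: "\<forall>e :: nat \<Rightarrow> 'u. range e \<subseteq> dom N \<longrightarrow> sat N e \<chi>"
  show "holds N (Neg (foldr Ex vs (Neg \<chi>)))" unfolding holds_def
  proof (intro allI impI)
    fix e :: "nat \<Rightarrow> 'u" assume e: "range e \<subseteq> dom N"
    have "\<not> sat N e' (Neg \<chi>)" if "\<forall>v. v \<notin> set vs \<longrightarrow> e' v = e v" "\<forall>v\<in>set vs. e' v \<in> dom N" for e'
    proof -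
      have "range e' \<subseteq> dom N" using that e by (metis image_subset_iff rangeI subsetD)
      then show ?thesis using h by auto
    qed
    then show "sat N e (Neg (foldr Ex vs (Neg \<chi>)))" unfolding sat.simps sat_exs by blast
  qed
qed

lemma range_upd: "range e \<subseteq> D \<Longrightarrow> a \<in> D \<Longrightarrow> range (e(x:=a)) \<subseteq> D"
  by auto

theorem corollary3p8:
  fixes L :: "('f, 'r) lang" and T :: "('f, 'r) fm set"
  assumes "complete_theory TYPE('u) L T"
    and "constantizable TYPE('u) L T"
  shows "strongly_minimal TYPE('v) L T"
  unfolding strongly_minimal_def
proof (intro allI impI)
  fix N :: "('f, 'r, 'v) struc" and p :: "('f, 'r) fm" and x :: nat and e :: "nat \<Rightarrow> 'v"
  assume N: "is_model L T N" and wfp: "wf_fm L p" and e: "range e \<subseteq> dom N"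
  obtain M :: "('f, 'r, 'u) struc" where M: "is_struc L M" "T = Th L M"
    using assms(1) unfolding complete_theory_def by blast
  obtain L' T' q where L': "complete_theory TYPE('u) L' T'" "T \<subseteq> T'" "q \<in> boolcomb L'"
    "equiv_in TYPE('u) L' T' p q"
    using assms(2) wfp unfolding constantizable_def constantizable_fm_def by blast
  obtain M' :: "('f, 'r, 'u) struc" where M': "is_struc L' M'" "T' = Th L' M'"
    using L'(1) unfolding complete_theory_def by blast
  have "is_model L' T' M'" using M' unfolding is_model_def Th_def by auto
  then have eqv: "\<And>e. range e \<subseteq> dom M' \<Longrightarrow> sat M' e p \<longleftrightarrow> sat M' e q"
    using L'(4) unfolding equiv_in_def by blast
  have "\<exists>K. \<forall>e. \<exists>F. finite F \<and> card F \<le> K \<and>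
     ((\<forall>a. sat M' (e(x:=a)) q \<longleftrightarrow> a \<in> F) \<or> (\<forall>a. sat M' (e(x:=a)) q \<longleftrightarrow> a \<notin> F))"
    by (rule boolcomb_fin[OF L'(3)])
  then obtain K where K: "\<forall>e. \<exists>F. finite F \<and> card F \<le> K \<and>
     ((\<forall>a. sat M' (e(x:=a)) q \<longleftrightarrow> a \<in> F) \<or> (\<forall>a. sat M' (e(x:=a)) q \<longleftrightarrow> a \<notin> F))" ..
  define m where "m = Max (insert x (fv p))"
  define zs where "zs = [Suc m..<Suc m + K]"
  have dzs: "distinct zs" and lzs: "length zs = K" unfolding zs_def by auto
  have fin: "finite (insert x (fv p))" using finite_fv by auto
  have disjz: "set zs \<inter> insert x (fv p) = {}"
  proof -
    have "\<forall>v\<in>insert x (fv p). v \<le> m" unfolding m_def using fin by auto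
    then show ?thesis unfolding zs_def by auto
  qed
  have disjz': "set zs \<inter> insert x (fv (Neg p)) = {}" using disjz by simp
  define \<chi> where "\<chi> = disj (AM x zs p) (AM x zs (Neg p))"
  define vs where "vs = sorted_list_of_set (fv \<chi>)"
  have vs: "set vs = fv \<chi>" unfolding vs_def using finite_fv[of \<chi>] by simp
  define \<sigma> where "\<sigma> = Neg (foldr Ex vs (Neg \<chi>))"
  have wf\<chi>: "wf_fm L \<chi>" unfolding \<chi>_def disj_def using wfp wf_AM[of L] by auto
  have sent: "sentence L \<sigma>" unfolding sentence_def \<sigma>_def using wf\<chi> vs
    by (auto simp: wf_exs fv_exs)
  have fv\<sigma>: "fv \<sigma> = {}" using sent unfolding sentence_def by auto
  obtain d where d: "d \<in> dom M'" using M'(1) unfolding is_struc_def by auto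
  have "\<forall>e. range e \<subseteq> dom M' \<longrightarrow> sat M' e \<chi>"
  proof (intro allI impI)
    fix e :: "nat \<Rightarrow> 'u" assume e: "range e \<subseteq> dom M'"
    obtain F where F: "finite F" "card F \<le> K"
      "(\<forall>a. sat M' (e(x:=a)) q \<longleftrightarrow> a \<in> F) \<or> (\<forall>a. sat M' (e(x:=a)) q \<longleftrightarrow> a \<notin> F)" using K by blast
    have pq: "\<And>a. a \<in> dom M' \<Longrightarrow> sat M' (e(x:=a)) p \<longleftrightarrow> sat M' (e(x:=a)) q"
      by (intro eqv range_upd[OF e])
    from F(3) show "sat M' e \<chi>"
    proof
      assume F3: "\<forall>a. sat M' (e(x:=a)) q \<longleftrightarrow> a \<in> F"
      have sub: "{a \<in> dom M'. sat M' (e(x:=a)) p} \<subseteq> F" using F3 pq by auto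
      have fS: "finite {a \<in> dom M'. sat M' (e(x:=a)) p}" using finite_subset[OF sub F(1)] .
      have cS: "card {a \<in> dom M'. sat M' (e(x:=a)) p} \<le> length zs" using card_mono[OF F(1) sub] F(2) lzs by simp
      have "sat M' e (AM x zs p)" by (rule AM_complete[OF dzs disjz fS cS d])
      then show ?thesis unfolding \<chi>_def disj_def by auto
    next
      assume F3: "\<forall>a. sat M' (e(x:=a)) q \<longleftrightarrow> a \<notin> F"
      have sub: "{a \<in> dom M'. sat M' (e(x:=a)) (Neg p)} \<subseteq> F" using F3 pq by auto
      have fS: "finite {a \<in> dom M'. sat M' (e(x:=a)) (Neg p)}" using finite_subset[OF sub F(1)] .
      have cS: "card {a \<in> dom M'. sat M' (e(x:=a)) (Neg p)} \<le> length zs" using card_mono[OF F(1) sub] F(2) lzs by simp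
      have "sat M' e (AM x zs (Neg p))" by (rule AM_complete[OF dzs disjz' fS cS d])
      then show ?thesis unfolding \<chi>_def disj_def by auto
    qed
  qed
  then have hM': "holds M' \<sigma>" unfolding \<sigma>_def by (rule iffD2[OF holds_closure[OF vs]])
  have "\<sigma> \<in> T"
  proof (rule ccontr)
    assume "\<sigma> \<notin> T"
    then have "\<not> holds M \<sigma>" using M(2) sent unfolding Th_def by auto
    then obtain e0 where e0: "range e0 \<subseteq> dom M" "\<not> sat M e0 \<sigma>" unfolding holds_def by auto
    have "\<forall>e. range e \<subseteq> dom M \<longrightarrow> sat M e (Neg \<sigma>)"
    proof (intro allI impI)
      fix e :: "nat \<Rightarrow> 'u"
      have "sat M e \<sigma> = sat M e0 \<sigma>" by (rule sat_cong) (simp add: fv\<sigma>)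
      then show "sat M e (Neg \<sigma>)" using e0(2) by simp
    qed
    then have "holds M (Neg \<sigma>)" unfolding holds_def by blast
    moreover have "sentence L (Neg \<sigma>)" using sent unfolding sentence_def by auto
    ultimately have "Neg \<sigma> \<in> T'" using M(2) L'(2) unfolding Th_def by auto
    then have "holds M' (Neg \<sigma>)" using M'(2) unfolding Th_def by auto
    then have "\<not> sat M' (\<lambda>_. d) \<sigma>" using d unfolding holds_def by auto
    moreover have "sat M' (\<lambda>_. d) \<sigma>" using hM' d unfolding holds_def by auto
    ultimately show False by blast
  qed
  then have "holds N \<sigma>" using N unfolding is_model_def by auto
  then have "\<forall>e :: nat \<Rightarrow> 'v. range e \<subseteq> dom N \<longrightarrow> sat N e \<chi>" unfolding \<sigma>_def by (rule iffD1[OF holds_closure[OF vs]])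
  then have "sat N e \<chi>" using e by blast
  then have "sat N e (AM x zs p) \<or> sat N e (AM x zs (Neg p))" unfolding \<chi>_def disj_def by auto
  then show "finite {a \<in> dom N. sat N (e(x := a)) p} \<or> finite {a \<in> dom N. \<not> sat N (e(x := a)) p}"
  proof (elim disjE)
    assume "sat N e (AM x zs p)"
    then have "finite {a \<in> dom N. sat N (e(x := a)) p}" by (rule AM_sound[OF _ disjz])
    then show ?thesis by (rule disjI1)
  next
    assume "sat N e (AM x zs (Neg p))"
    then have "finite {a \<in> dom N. sat N (e(x := a)) (Neg p)}" by (rule AM_sound[OF _ disjz'])
    then show ?thesis by simp
  qed
qed

end
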